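(* Given a Spherical Diagram $\mathcal D$, every great circle on the unit sphere is crossed by at least three distinct arcs of $\mathcal D$.
   Context: A geodesic arc on the unit sphere in $\mathbb R^3$ is the unique shortest curve joining two non-antipodal points. An arc $a$ blocks an arc $b$ (equivalently, $b$ hits $a$) if an endpoint of $b$ lies in the relative interior of $a$. A Spherical Diagram (SD) is a finite non-empty collection $\mathcal D$ of pairwise interior-disjoint geodesic arcs on the unit sphere such that each arc of $\mathcal D$ is blocked by arcs of $\mathcal D$ at each of its endpoints. An arc $a$ crosses a curve $\gamma$ if $a\cap\gamma$ contains an isolated point $x$ in the relative interior of $a$ such that every neighborhood of $x$ contains points of $\gamma$ on both sides of $a$. *)

theory Defs
  imports "HOL-Analysis.Analysis"
begin

type_synonym pt = "real^3"

definition arc_ends :: "pt \<Rightarrow> pt \<Rightarrow> bool" where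
  "arc_ends p q \<longleftrightarrow> norm p = 1 \<and> norm q = 1 \<and> p \<noteq> q \<and> p \<noteq> - q"

text \<open>The geodesic (minor great-circle) arc from p to q: radial projection of the chord.\<close>
definition geo_arc :: "pt \<Rightarrow> pt \<Rightarrow> pt set" where
  "geo_arc p q = (\<lambda>v. v /\<^sub>R norm v) ` closed_segment p q"

definition geo_arc_int :: "pt \<Rightarrow> pt \<Rightarrow> pt set" where
  "geo_arc_int p q = (\<lambda>v. v /\<^sub>R norm v) ` open_segment p q"

definition is_arc :: "pt set \<Rightarrow> bool" where
  "is_arc A \<longleftrightarrow> (\<exists>p q. arc_ends p q \<and> A = geo_arc p q)"

definition relint_arc :: "pt set \<Rightarrow> pt set" where
  "relint_arc A = {x. \<exists>p q. arc_ends p q \<and> A = geo_arc p q \<and> x \<in> geo_arc_int p q}"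

definition endpoint_of :: "pt \<Rightarrow> pt set \<Rightarrow> bool" where
  "endpoint_of x A \<longleftrightarrow> (\<exists>p q. arc_ends p q \<and> A = geo_arc p q \<and> (x = p \<or> x = q))"

definition blocks :: "pt set \<Rightarrow> pt set \<Rightarrow> bool" where
  "blocks a b \<longleftrightarrow> (\<exists>x. endpoint_of x b \<and> x \<in> relint_arc a)"

definition spherical_diagram :: "pt set set \<Rightarrow> bool" where
  "spherical_diagram D \<longleftrightarrow>
     finite D \<and> D \<noteq> {} \<and> (\<forall>a\<in>D. is_arc a) \<and>
     (\<forall>a\<in>D. \<forall>b\<in>D. a \<noteq> b \<longrightarrow> relint_arc a \<inter> relint_arc b = {}) \<and>
     (\<forall>b\<in>D. \<forall>x. endpoint_of x b \<longrightarrow> (\<exists>a\<in>D. x \<in> relint_arc a))"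

definition great_circle :: "pt \<Rightarrow> pt set" where
  "great_circle n = {x. norm x = 1 \<and> x \<bullet> n = 0}"

definition crosses :: "pt set \<Rightarrow> pt set \<Rightarrow> bool" where
  "crosses a \<gamma> \<longleftrightarrow> (\<exists>p q x. arc_ends p q \<and> a = geo_arc p q \<and> x \<in> geo_arc_int p q \<and> x \<in> \<gamma> \<and>
      (\<exists>e>0. a \<inter> \<gamma> \<inter> ball x e = {x}) \<and>
      (\<forall>e>0. (\<exists>y\<in>\<gamma>. dist y x < e \<and> y \<bullet> cross3 p q > 0) \<and>
             (\<exists>y\<in>\<gamma>. dist y x < e \<and> y \<bullet> cross3 p q < 0)))"

end

theory Submission imports Defs begin

abbreviation nz :: "pt \<Rightarrow> pt" where "nz v \<equiv> v /\<^sub>R norm v"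

lemma indep0:
  assumes "arc_ends p q" "a *\<^sub>R p + b *\<^sub>R q = 0"
  shows "a = 0 \<and> b = 0"
proof (rule ccontr)
  assume H: "\<not> (a = 0 \<and> b = 0)"
  have np: "norm p = 1" and nq: "norm q = 1" and pq: "p \<noteq> q" "p \<noteq> - q"
    using assms(1) by (auto simp: arc_ends_def)
  show False
  proof (cases "a = 0")
    case True
    then have "b \<noteq> 0" using H by auto
    then have "q = 0" using assms(2) True by auto
    then show False using nq by simp
  next
    case False
    then have pe: "p = (- b / a) *\<^sub>R q" using assms(2)
      by (metis (no_types, lifting) add_eq_0_iff2 divide_inverse_commute scaleR_minus_left scaleR_scaleR
        vector_fraction_eq_iff)
    then have "norm p = \<bar>- b / a\<bar>" using nq by simp
    then have "\<bar>- b / a\<bar> = 1" using np by linarith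
    then have "- b / a = 1 \<or> - b / a = -1" by linarith
    then show False
    proof
      assume "- b / a = 1" then show False using pe pq(1) by simp
    next
      assume "- b / a = -1" then show False using pe pq(2) by simp
    qed
  qed
qed

lemma indep_eq:
  assumes "arc_ends p q" "a *\<^sub>R p + b *\<^sub>R q = c *\<^sub>R p + d *\<^sub>R q"
  shows "a = c \<and> b = d"
proof -
  have "(a - c) *\<^sub>R p + (b - d) *\<^sub>R q = 0" using assms(2)
    by (simp add: algebra_simps)
  from indep0[OF assms(1) this] show ?thesis by simp
qed

lemma arc_ends_sym: "arc_ends p q \<Longrightarrow> arc_ends q p"
  by (auto simp: arc_ends_def)

lemma geo_arc_sym: "geo_arc p q = geo_arc q p"
  by (simp add: geo_arc_def closed_segment_commute)

lemma geo_arc_int_sym: "geo_arc_int p q = geo_arc_int q p"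
  by (simp add: geo_arc_int_def open_segment_commute)

lemma nz_scale: "c > 0 \<Longrightarrow> nz (c *\<^sub>R v) = nz v"
  by (simp add: divide_inverse_commute)

lemma comb_nonzero:
  assumes "arc_ends p q" "a \<ge> 0" "b \<ge> 0" "a + b > 0"
  shows "a *\<^sub>R p + b *\<^sub>R q \<noteq> 0"
  using indep0[OF assms(1)] assms(2-4) by fastforce

lemma in_arc:
  assumes "arc_ends p q" "x \<in> geo_arc p q"
  shows "norm x = 1 \<and> (\<exists>l m. l \<ge> 0 \<and> m \<ge> 0 \<and> x = l *\<^sub>R p + m *\<^sub>R q)"
proof -
  obtain w where w: "w \<in> closed_segment p q" "x = nz w" using assms(2) by (auto simp: geo_arc_def)
  obtain u where u: "0 \<le> u" "u \<le> 1" "w = (1 - u) *\<^sub>R p + u *\<^sub>R q" using w(1) by (auto simp: in_segment)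
  have "w \<noteq> 0" using comb_nonzero[OF assms(1), of "1-u" u] u by auto
  then have "norm x = 1" using w(2) by simp
  moreover have "x = ((1-u)/norm w) *\<^sub>R p + (u / norm w) *\<^sub>R q"
  proof -
    have "x = (1/norm w) *\<^sub>R ((1 - u) *\<^sub>R p + u *\<^sub>R q)" using w(2) u(3) by (simp add: divide_inverse_commute)
    also have "\<dots> = ((1-u)/norm w) *\<^sub>R p + (u / norm w) *\<^sub>R q" by (simp add: scaleR_add_right)
    finally show ?thesis .
  qed
  ultimately show ?thesis using u by (intro conjI exI[of _ "(1-u)/norm w"] exI[of _ "u/norm w"]) auto
qed

lemma in_arc_int:
  assumes "arc_ends p q" "x \<in> geo_arc_int p q"
  shows "norm x = 1 \<and> (\<exists>l m. l > 0 \<and> m > 0 \<and> x = l *\<^sub>R p + m *\<^sub>R q)"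
proof -
  obtain w where w: "w \<in> open_segment p q" "x = nz w" using assms(2) by (auto simp: geo_arc_int_def)
  obtain u where u: "0 < u" "u < 1" "w = (1 - u) *\<^sub>R p + u *\<^sub>R q" using w(1) by (auto simp: in_segment)
  have "w \<noteq> 0" using comb_nonzero[OF assms(1), of "1-u" u] u by auto
  then have "norm x = 1" and "norm w > 0" using w(2) by auto
  moreover have "x = ((1-u)/norm w) *\<^sub>R p + (u / norm w) *\<^sub>R q"
  proof -
    have "x = (1/norm w) *\<^sub>R ((1 - u) *\<^sub>R p + u *\<^sub>R q)" using w(2) u(3) by (simp add: divide_inverse_commute)
    also have "\<dots> = ((1-u)/norm w) *\<^sub>R p + (u / norm w) *\<^sub>R q" by (simp add: scaleR_add_right)
    finally show ?thesis .
  qed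
  ultimately show ?thesis using u by (intro conjI exI[of _ "(1-u)/norm w"] exI[of _ "u/norm w"]) auto
qed

lemma mk_arc_int:
  assumes "arc_ends p q" "a > 0" "b > 0"
  shows "nz (a *\<^sub>R p + b *\<^sub>R q) \<in> geo_arc_int p q"
proof -
  define t where "t = b / (a + b)"
  have t: "0 < t" "t < 1" using assms by (auto simp: t_def)
  have e1: "(a+b)*(1-t) = a" "(a+b)*t = b" using assms by (simp_all add: t_def field_simps)
  have "(a + b) *\<^sub>R ((1 - t) *\<^sub>R p + t *\<^sub>R q) = ((a+b)*(1-t)) *\<^sub>R p + ((a+b)*t) *\<^sub>R q"
    by (simp add: scaleR_add_right)
  then have "a *\<^sub>R p + b *\<^sub>R q = (a + b) *\<^sub>R ((1 - t) *\<^sub>R p + t *\<^sub>R q)"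
    using e1 by simp
  then have "nz (a *\<^sub>R p + b *\<^sub>R q) = nz ((1 - t) *\<^sub>R p + t *\<^sub>R q)"
    using nz_scale[of "a+b"] assms by simp
  moreover have "(1 - t) *\<^sub>R p + t *\<^sub>R q \<in> open_segment p q"
    using t assms(1) by (auto simp: in_segment arc_ends_def)
  ultimately show ?thesis by (auto simp: geo_arc_int_def)
qed

lemma int_sub_arc: "geo_arc_int p q \<subseteq> geo_arc p q"
  unfolding geo_arc_int_def geo_arc_def using segment_open_subset_closed by blast

lemma ends_in_arc: "arc_ends p q \<Longrightarrow> p \<in> geo_arc p q \<and> q \<in> geo_arc p q"
proof -
  assume a: "arc_ends p q"
  then have "p = nz p" "q = nz q" by (auto simp: arc_ends_def)
  moreover have "nz p \<in> geo_arc p q" "nz q \<in> geo_arc p q" unfolding geo_arc_def by auto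
  ultimately show ?thesis by simp
qed

lemma arc_split: "geo_arc p q \<subseteq> geo_arc_int p q \<union> {nz p, nz q}"
  unfolding geo_arc_def geo_arc_int_def closed_segment_eq_open by auto


lemma not_own_int:
  assumes pq: "arc_ends p q" and pq': "arc_ends p' q'" and eq: "geo_arc p q = geo_arc p' q'"
    and pin: "p \<in> geo_arc_int p' q'"
  shows False
proof -
  obtain a b where ab: "a > 0" "b > 0" "p = a *\<^sub>R p' + b *\<^sub>R q'" using in_arc_int[OF pq' pin] by auto
  have "p' \<in> geo_arc p q" "q' \<in> geo_arc p q" using ends_in_arc[OF pq'] eq by auto
  then obtain l1 m1 l2 m2 where lm: "l1 \<ge> 0" "m1 \<ge> 0" "p' = l1 *\<^sub>R p + m1 *\<^sub>R q"
    "l2 \<ge> 0" "m2 \<ge> 0" "q' = l2 *\<^sub>R p + m2 *\<^sub>R q"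
    using in_arc[OF pq] by meson
  have "1 *\<^sub>R p + 0 *\<^sub>R q = (a*l1 + b*l2) *\<^sub>R p + (a*m1 + b*m2) *\<^sub>R q"
    using ab(3) lm(3,6) by (simp add: algebra_simps)
  from indep_eq[OF pq this] have c: "a*l1 + b*l2 = 1" "a*m1 + b*m2 = 0" by auto
  have "a*m1 \<ge> 0" "b*m2 \<ge> 0" using ab lm by auto
  then have "m1 = 0" "m2 = 0" using c(2) ab by (auto simp: add_nonneg_eq_0_iff)
  then have e: "p' = l1 *\<^sub>R p" "q' = l2 *\<^sub>R p" using lm by auto
  have "norm p = 1" "norm p' = 1" "norm q' = 1" using pq pq' by (auto simp: arc_ends_def)
  then have "l1 = 1" "l2 = 1" using e lm by auto
  then show False using e pq' by (auto simp: arc_ends_def)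
qed

lemma endpoint_cases:
  assumes pq: "arc_ends p q" and ep: "endpoint_of x (geo_arc p q)"
  shows "x = p \<or> x = q"
proof -
  have main: "x = p \<or> x = q" if pq': "arc_ends x q'" and eq: "geo_arc p q = geo_arc x q'" for q'
  proof -
    have "x \<in> geo_arc p q" using ends_in_arc[OF pq'] eq by auto
    moreover have "nz p = p" "nz q = q" using pq by (auto simp: arc_ends_def)
    ultimately have "x \<in> geo_arc_int p q \<or> x = p \<or> x = q" using arc_split[of p q] by auto
    moreover have "x \<notin> geo_arc_int p q" using not_own_int[OF pq' pq] eq by metis
    ultimately show ?thesis by auto
  qed
  obtain p' q' where "arc_ends p' q'" "geo_arc p q = geo_arc p' q'" "x = p' \<or> x = q'"
    using ep by (auto simp: endpoint_of_def)
  then show ?thesis using main arc_ends_sym geo_arc_sym by metis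
qed

lemma plane_coords:
  assumes m: "m \<noteq> 0" and pq: "arc_ends p q" and o: "p \<bullet> m = 0" "q \<bullet> m = 0" "x \<bullet> m = 0"
  shows "\<exists>a b. x = a *\<^sub>R p + b *\<^sub>R q"
proof -
  define V where "V = {x. m \<bullet> x = 0}"
  have dV: "dim V = 2" unfolding V_def using dim_hyperplane[OF m] by simp
  have pq0: "p \<noteq> q" "q \<noteq> 0" using pq by (auto simp: arc_ends_def)
  have nsp: "p \<notin> span {q}"
  proof
    assume "p \<in> span {q}"
    then obtain k where "p = k *\<^sub>R q" by (auto simp: span_singleton)
    then have "1 *\<^sub>R p + (-k) *\<^sub>R q = 0" by simp
    from indep0[OF pq this] show False by simp
  qed
  have ind: "independent {p, q}"
    using nsp pq0 by (simp add: independent_insertI)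
  have "V \<subseteq> span {p, q}"
    by (rule card_ge_dim_independent) (use o ind dV pq0 in \<open>auto simp: V_def inner_commute\<close>)
  then have "x \<in> span {p, q}" using o by (auto simp: V_def inner_commute)
  then obtain a where "x - a *\<^sub>R p \<in> span {q}" by (auto simp: span_insert)
  then obtain b where "x - a *\<^sub>R p = b *\<^sub>R q" by (auto simp: span_singleton)
  then have "x = a *\<^sub>R p + b *\<^sub>R q" by (simp add: algebra_simps)
  then show ?thesis by blast
qed


lemma overlap:
  assumes m: "m \<noteq> 0" and pq: "arc_ends p q" and pq': "arc_ends p' q'"
    and o: "p \<bullet> m = 0" "q \<bullet> m = 0" "p' \<bullet> m = 0" "q' \<bullet> m = 0"
    and pin: "p \<in> geo_arc_int p' q'"
  shows "\<exists>y. y \<in> geo_arc_int p q \<and> y \<in> geo_arc_int p' q'"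
proof -
  obtain a b where ab: "a > 0" "b > 0" "p = a *\<^sub>R p' + b *\<^sub>R q'" using in_arc_int[OF pq' pin] by auto
  obtain c d where cd: "q = c *\<^sub>R p' + d *\<^sub>R q'" using plane_coords[OF m pq' o(3,4) o(2)] by auto
  define K where "K = a + b + \<bar>c\<bar> + \<bar>d\<bar>"
  define e where "e = min a b / (2 * K)"
  have K: "K > 0" "a \<le> K" "b \<le> K" "a + \<bar>c\<bar> \<le> K" "b + \<bar>d\<bar> \<le> K" using ab by (auto simp: K_def)
  have mn: "min a b > 0" "min a b \<le> a" "min a b \<le> b" using ab by auto
  have e0: "e > 0" using K mn by (simp add: e_def)
  have eK: "e * K = min a b / 2" using K by (simp add: e_def)
  have e1: "e < 1"
  proof -
    have "e * K < K" using eK mn K by linarith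
    then show ?thesis using K by simp
  qed
  have c1: "(1 - e) * a + e * c > 0"
  proof -
    have "e * c \<ge> - (e * \<bar>c\<bar>)" using mult_left_mono[of "-\<bar>c\<bar>" c e] e0 by simp
    moreover have "e * (a + \<bar>c\<bar>) \<le> e * K" using K e0 by (simp add: mult_left_mono)
    moreover have "(1 - e) * a + e * c = a - e * (a + \<bar>c\<bar>) + (e * c + e * \<bar>c\<bar>)" by (simp add: algebra_simps)
    ultimately show ?thesis using eK mn by linarith
  qed
  have c2: "(1 - e) * b + e * d > 0"
  proof -
    have "e * d \<ge> - (e * \<bar>d\<bar>)" using mult_left_mono[of "-\<bar>d\<bar>" d e] e0 by simp
    moreover have "e * (b + \<bar>d\<bar>) \<le> e * K" using K e0 by (simp add: mult_left_mono)
    moreover have "(1 - e) * b + e * d = b - e * (b + \<bar>d\<bar>) + (e * d + e * \<bar>d\<bar>)" by (simp add: algebra_simps)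
    ultimately show ?thesis using eK mn by linarith
  qed
  have w: "(1 - e) *\<^sub>R p + e *\<^sub>R q = ((1 - e) * a + e * c) *\<^sub>R p' + ((1 - e) * b + e * d) *\<^sub>R q'"
    using ab(3) cd by (simp add: algebra_simps)
  have "nz ((1 - e) *\<^sub>R p + e *\<^sub>R q) \<in> geo_arc_int p q"
    using mk_arc_int[OF pq] e0 e1 by simp
  moreover have "nz ((1 - e) *\<^sub>R p + e *\<^sub>R q) \<in> geo_arc_int p' q'"
    unfolding w using mk_arc_int[OF pq' c1 c2] .
  ultimately show ?thesis by blast
qed

lemma nz_dist:
  assumes "norm x = 1"
  shows "norm (nz w - x) \<le> 2 * norm (w - x)"
proof (cases "w = 0")
  case True
  then show ?thesis using assms by simp
next
  case False
  have "nz w - x = (nz w - w) + (w - x)" by simp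
  then have "norm (nz w - x) \<le> norm (nz w - w) + norm (w - x)" by (metis norm_triangle_ineq)
  moreover have "nz w - w = (1 / norm w - 1) *\<^sub>R w" by (simp add: algebra_simps divide_inverse_commute)
  then have "norm (nz w - w) = \<bar>1 - norm w\<bar>" using False
    by (simp add: abs_mult divide_simps)
  moreover have "\<bar>norm x - norm w\<bar> \<le> norm (w - x)" by (metis norm_triangle_ineq3 norm_minus_commute)
  ultimately show ?thesis using assms by simp
qed


lemma cross_unique:
  assumes pq: "arc_ends p q" and pn: "p \<bullet> n > 0" and qn: "q \<bullet> n < 0"
    and y: "y \<in> geo_arc p q" "y \<bullet> n = 0" and z: "z \<in> geo_arc p q" "z \<bullet> n = 0"
  shows "y = z"
proof -
  define A where "A = p \<bullet> n"
  define B where "B = - (q \<bullet> n)"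
  have AB: "A > 0" "B > 0" using pn qn by (auto simp: A_def B_def)
  define r where "r = p + (A / B) *\<^sub>R q"
  have rep: "\<exists>l. l \<ge> 0 \<and> v = l *\<^sub>R r \<and> norm v = 1" if v: "v \<in> geo_arc p q" "v \<bullet> n = 0" for v
  proof -
    obtain l m where lm: "l \<ge> 0" "m \<ge> 0" "v = l *\<^sub>R p + m *\<^sub>R q" and nv: "norm v = 1"
      using in_arc[OF pq v(1)] by auto
    have "l * A - m * B = 0" using v(2) lm(3) by (simp add: A_def B_def inner_add_left)
    then have "m = l * A / B" using AB by (simp add: field_simps)
    then have "v = l *\<^sub>R r" using lm(3) by (simp add: r_def algebra_simps)
    then show ?thesis using lm nv by blast
  qed
  obtain l1 where l1: "l1 \<ge> 0" "y = l1 *\<^sub>R r" "norm y = 1" using rep y by blast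
  obtain l2 where l2: "l2 \<ge> 0" "z = l2 *\<^sub>R r" "norm z = 1" using rep z by blast
  have "l1 * norm r = 1" "l2 * norm r = 1" using l1 l2 by auto
  then have "l1 = l2" by (metis mult_cancel_right mult_zero_left zero_neq_one)
  then show ?thesis using l1 l2 by simp
qed

lemma side_pt:
  assumes x: "norm x = 1" "x \<bullet> n = 0" "x \<bullet> N = 0" and d: "d \<bullet> n = 0" "d \<bullet> N > 0"
    and eps: "\<epsilon> \<noteq> 0" "2 * (\<bar>\<epsilon>\<bar> * norm d) < e"
  shows "\<exists>y\<in>great_circle n. dist y x < e \<and> (y \<bullet> N) * \<epsilon> > 0"
proof -
  define w where "w = x + \<epsilon> *\<^sub>R d"
  have wN: "w \<bullet> N = \<epsilon> * (d \<bullet> N)" using x by (simp add: w_def inner_add_left)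
  then have w0: "w \<noteq> 0" using eps d by auto
  have "nz w \<bullet> n = 0" using x d by (simp add: w_def inner_add_left)
  moreover have "norm (nz w) = 1" using w0 by simp
  ultimately have "nz w \<in> great_circle n" by (simp add: great_circle_def)
  moreover have "dist (nz w) x < e"
  proof -
    have "dist (nz w) x \<le> 2 * norm (w - x)" using nz_dist[OF x(1)] by (simp add: dist_norm)
    also have "norm (w - x) = \<bar>\<epsilon>\<bar> * norm d" by (simp add: w_def)
    finally show ?thesis using eps by linarith
  qed
  moreover have "(nz w \<bullet> N) * \<epsilon> > 0"
  proof -
    have "(nz w \<bullet> N) * \<epsilon> = (\<epsilon> * \<epsilon>) * (d \<bullet> N) / norm w" using wN by (simp add: field_simps)
    moreover have "\<epsilon> * \<epsilon> > 0" using eps(1) by (cases "\<epsilon> > 0") (auto simp: mult_neg_neg)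
    ultimately show ?thesis using d w0 by simp
  qed
  ultimately show ?thesis by blast
qed

lemma trans_crosses:
  assumes pq: "arc_ends p q" and pn: "p \<bullet> n > 0" and qn: "q \<bullet> n < 0"
  shows "crosses (geo_arc p q) (great_circle n)"
proof -
  define A where "A = p \<bullet> n"
  define B where "B = - (q \<bullet> n)"
  have AB: "A > 0" "B > 0" using pn qn by (auto simp: A_def B_def)
  define x where "x = nz (B *\<^sub>R p + A *\<^sub>R q)"
  have xi: "x \<in> geo_arc_int p q" using mk_arc_int[OF pq AB(2,1)] by (simp add: x_def)
  have nx: "norm x = 1" using in_arc_int[OF pq xi] by simp
  have "(B *\<^sub>R p + A *\<^sub>R q) \<bullet> n = 0" by (simp add: A_def B_def inner_add_left inner_diff_left mult.commute)
  then have xn: "x \<bullet> n = 0" by (simp add: x_def)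
  have xC: "x \<in> great_circle n" using nx xn by (simp add: great_circle_def)
  have xa: "x \<in> geo_arc p q" using xi int_sub_arc by blast
  have iso: "geo_arc p q \<inter> great_circle n \<inter> ball x 1 = {x}"
  proof
    show "geo_arc p q \<inter> great_circle n \<inter> ball x 1 \<subseteq> {x}"
      using cross_unique[OF pq pn qn _ _ xa xn] by (auto simp: great_circle_def)
    show "{x} \<subseteq> geo_arc p q \<inter> great_circle n \<inter> ball x 1" using xa xC by auto
  qed
  define N where "N = cross3 p q"
  have N0: "N \<noteq> 0"
  proof
    assume "N = 0"
    then have "collinear {0, p, q}" by (simp add: N_def cross_eq_0)
    then obtain c where "p = 0 \<or> q = 0 \<or> q = c *\<^sub>R p" by (auto simp: collinear_lemma)
    moreover have "p \<noteq> 0" "q \<noteq> 0" using pq by (auto simp: arc_ends_def)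
    ultimately have "c *\<^sub>R p + (-1) *\<^sub>R q = 0" by simp
    from indep0[OF pq this] show False by simp
  qed
  have n0: "n \<noteq> 0" using pn by auto
  define k where "k = (N \<bullet> n) / (n \<bullet> n)"
  define d where "d = N - k *\<^sub>R n"
  have dn: "d \<bullet> n = 0" using n0 by (simp add: d_def k_def inner_diff_left)
  have dN: "d \<bullet> N = d \<bullet> d"
  proof -
    have "N = d + k *\<^sub>R n" by (simp add: d_def)
    then have "d \<bullet> N = d \<bullet> d + k * (d \<bullet> n)" by (metis inner_add_right inner_scaleR_right)
    then show ?thesis using dn by simp
  qed
  have d0: "d \<noteq> 0"
  proof
    assume "d = 0"
    then have Nk: "N = k *\<^sub>R n" by (simp add: d_def)
    have "p \<bullet> N = 0" by (simp add: N_def dot_cross_self)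
    then have "k * (p \<bullet> n) = 0" using Nk by simp
    then have "k = 0" using pn by simp
    then show False using Nk N0 by simp
  qed
  have dNp: "d \<bullet> N > 0" using dN d0 by simp
  have xN: "x \<bullet> N = 0"
    by (simp add: x_def N_def inner_add_left dot_cross_self)
  have sides: "\<exists>y\<in>great_circle n. dist y x < e \<and> (y \<bullet> N) * s > 0" if "e > 0" "s = 1 \<or> s = -1" for e s
  proof -
    define \<epsilon> where "\<epsilon> = s * e / (2 * (norm d + 1))"
    have nd: "2 * norm d + 2 \<noteq> 0" "norm d + 1 > 0" "1 + norm d \<noteq> 0" "2 + norm d * 2 \<noteq> 0" using norm_ge_zero[of d] by linarith+
    have ae: "\<bar>\<epsilon>\<bar> = e / (2 * (norm d + 1))" using that nd by (auto simp: \<epsilon>_def abs_mult)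
    have "\<epsilon> \<noteq> 0" using that nd by (auto simp: \<epsilon>_def)
    moreover have "2 * (\<bar>\<epsilon>\<bar> * norm d) < e"
    proof -
      have "2 * (\<bar>\<epsilon>\<bar> * norm d) = e * (norm d / (norm d + 1))" unfolding ae using nd by (simp add: field_simps)
      also have "\<dots> < e * 1" using that(1) nd by (intro mult_strict_left_mono) (auto simp: divide_simps)
      finally show ?thesis by simp
    qed
    ultimately obtain y where y: "y \<in> great_circle n" "dist y x < e" "(y \<bullet> N) * \<epsilon> > 0"
      using side_pt[OF nx xn xN dn dNp] by blast
    have "(y \<bullet> N) * \<epsilon> = ((y \<bullet> N) * s) * (e / (2 * (norm d + 1)))" by (simp add: \<epsilon>_def)
    moreover have "e / (2 * (norm d + 1)) > 0" using that nd by simp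
    ultimately have "(y \<bullet> N) * s > 0" using y(3) by (metis zero_less_mult_pos2)
    then show ?thesis using y by blast
  qed
  have E1: "\<exists>e>0. geo_arc p q \<inter> great_circle n \<inter> ball x e = {x}" using iso by (intro exI[of _ 1]) auto
  have E2: "\<forall>e>0. (\<exists>y\<in>great_circle n. dist y x < e \<and> y \<bullet> cross3 p q > 0) \<and>
             (\<exists>y\<in>great_circle n. dist y x < e \<and> y \<bullet> cross3 p q < 0)"
  proof (intro allI impI conjI)
    fix e :: real assume e: "e > 0"
    show "\<exists>y\<in>great_circle n. dist y x < e \<and> y \<bullet> cross3 p q > 0"
      using sides[OF e, of 1] by (simp add: N_def)
    show "\<exists>y\<in>great_circle n. dist y x < e \<and> y \<bullet> cross3 p q < 0"
      using sides[OF e, of "-1"] by (simp add: N_def)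
  qed
  show ?thesis unfolding crosses_def using pq xi xC E1 E2 by blast
qed


lemma sd_arc:
  assumes "spherical_diagram D" "a \<in> D"
  shows "\<exists>p q. arc_ends p q \<and> a = geo_arc p q"
  using assms by (auto simp: spherical_diagram_def is_arc_def)

lemma sd_block:
  assumes "spherical_diagram D" "b \<in> D" "endpoint_of x b"
  shows "\<exists>a p q. a \<in> D \<and> arc_ends p q \<and> a = geo_arc p q \<and> x \<in> geo_arc_int p q"
proof -
  have "\<forall>b\<in>D. \<forall>x. endpoint_of x b \<longrightarrow> (\<exists>a\<in>D. x \<in> relint_arc a)"
    using assms(1) by (simp add: spherical_diagram_def)
  then have "\<exists>a\<in>D. x \<in> relint_arc a" using assms(2,3) by blast
  then obtain a where "a \<in> D" "x \<in> relint_arc a" by blast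
  then show ?thesis by (auto simp: relint_arc_def)
qed

lemma endpoint_first: "arc_ends p q \<Longrightarrow> endpoint_of p (geo_arc p q)"
  by (auto simp: endpoint_of_def)

lemma endpoint_second: "arc_ends p q \<Longrightarrow> endpoint_of q (geo_arc p q)"
  by (auto simp: endpoint_of_def)

lemma sd_no_overlap:
  assumes sd: "spherical_diagram D" and m: "m \<noteq> 0"
    and pq: "arc_ends p q" "geo_arc p q \<in> D" and pq': "arc_ends p' q'" "geo_arc p' q' \<in> D"
    and o: "p \<bullet> m = 0" "q \<bullet> m = 0" "p' \<bullet> m = 0" "q' \<bullet> m = 0"
    and pin: "p \<in> geo_arc_int p' q'"
  shows False
proof -
  obtain y where y: "y \<in> geo_arc_int p q" "y \<in> geo_arc_int p' q'"
    using overlap[OF m pq(1) pq'(1) o pin] by blast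
  have ne: "geo_arc p q \<noteq> geo_arc p' q'" using not_own_int[OF pq(1) pq'(1) _ pin] by blast
  have "y \<in> relint_arc (geo_arc p q)" "y \<in> relint_arc (geo_arc p' q')"
    using y pq pq' by (auto simp: relint_arc_def)
  then show False using sd ne pq(2) pq'(2) by (auto simp: spherical_diagram_def)
qed

definition Tr :: "pt \<Rightarrow> pt set \<Rightarrow> bool" where
  "Tr n a \<longleftrightarrow> (\<exists>p q. arc_ends p q \<and> a = geo_arc p q \<and> p \<bullet> n > 0 \<and> q \<bullet> n < 0)"

definition Gd :: "pt set set \<Rightarrow> pt \<Rightarrow> pt \<Rightarrow> bool" where
  "Gd D n u \<longleftrightarrow> (\<exists>a\<in>D. Tr n a \<and> (\<exists>x\<in>a. x \<bullet> n = 0 \<and> x \<bullet> u > 0))"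

lemma S1:
  assumes pq: "arc_ends p q" "geo_arc p q \<in> D"
    and z: "z \<in> geo_arc_int p q" "z \<bullet> n = 0" "z \<bullet> u > 0"
  shows "Gd D n u \<or> (p \<bullet> n = 0 \<and> q \<bullet> n = 0)"
proof -
  obtain a b where ab: "a > 0" "b > 0" "z = a *\<^sub>R p + b *\<^sub>R q" using in_arc_int[OF pq(1) z(1)] by auto
  have e: "a * (p \<bullet> n) + b * (q \<bullet> n) = 0" using z(2) ab(3) by (simp add: inner_add_left)
  have za: "z \<in> geo_arc p q" using z(1) int_sub_arc by blast
  show ?thesis
  proof (cases "p \<bullet> n > 0")
    case True
    then have "a * (p \<bullet> n) > 0" using ab by simp
    then have "b * (q \<bullet> n) < 0" using e by linarith
    then have "q \<bullet> n < 0" using ab(2) by (simp add: mult_less_0_iff)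
    then have "Tr n (geo_arc p q)" using pq True by (auto simp: Tr_def)
    then show ?thesis using pq(2) za z by (auto simp: Gd_def)
  next
    case False
    show ?thesis
    proof (cases "p \<bullet> n < 0")
      case True
      then have "a * (p \<bullet> n) < 0" using ab by (simp add: mult_pos_neg)
      then have "b * (q \<bullet> n) > 0" using e by linarith
      then have "q \<bullet> n > 0" using ab(2) by (simp add: zero_less_mult_iff)
      then have "Tr n (geo_arc p q)" unfolding Tr_def using True arc_ends_sym[OF pq(1)] geo_arc_sym[of p q] by blast
      then show ?thesis using pq(2) za z by (auto simp: Gd_def)
    next
      case False2: False
      then have "p \<bullet> n = 0" using False by simp
      then have "q \<bullet> n = 0" using e ab by simp
      then show ?thesis using \<open>p \<bullet> n = 0\<close> by simp
    qed
  qed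
qed

lemma S2a:
  assumes sd: "spherical_diagram D" and n: "n \<noteq> 0"
    and pq: "arc_ends p q" "geo_arc p q \<in> D" and o: "p \<bullet> n = 0" "q \<bullet> n = 0" and pu: "p \<bullet> u > 0"
  shows "Gd D n u"
proof (rule ccontr)
  assume nG: "\<not> Gd D n u"
  obtain a p' q' where a: "a \<in> D" "arc_ends p' q'" "a = geo_arc p' q'" "p \<in> geo_arc_int p' q'"
    using sd_block[OF sd pq(2) endpoint_first[OF pq(1)]] by blast
  have "p' \<bullet> n = 0 \<and> q' \<bullet> n = 0" using S1[OF a(2) _ a(4) o(1) pu] a nG by auto
  then show False using sd_no_overlap[OF sd n pq a(2)] a o by auto
qed

lemma S2:
  assumes sd: "spherical_diagram D" and n: "n \<noteq> 0"
    and pq: "arc_ends p q" "geo_arc p q \<in> D" and qn: "q \<bullet> n = 0" and qu: "q \<bullet> u > 0"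
  shows "Gd D n u"
proof (rule ccontr)
  assume nG: "\<not> Gd D n u"
  obtain a p' q' where a: "a \<in> D" "arc_ends p' q'" "a = geo_arc p' q'" "q \<in> geo_arc_int p' q'"
    using sd_block[OF sd pq(2) endpoint_second[OF pq(1)]] by blast
  have o: "p' \<bullet> n = 0" "q' \<bullet> n = 0" using S1[OF a(2) _ a(4) qn qu] a nG by auto
  obtain al be where ab: "al > 0" "be > 0" "q = al *\<^sub>R p' + be *\<^sub>R q'" using in_arc_int[OF a(2,4)] by auto
  have "al * (p' \<bullet> u) + be * (q' \<bullet> u) > 0" using qu ab(3) by (simp add: inner_add_left)
  then have "p' \<bullet> u > 0 \<or> q' \<bullet> u > 0"
  proof (rule contrapos_pp)
    assume "\<not> (p' \<bullet> u > 0 \<or> q' \<bullet> u > 0)"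
    then have "al * (p' \<bullet> u) \<le> 0" "be * (q' \<bullet> u) \<le> 0" using ab(1,2)
      by (simp_all add: mult_nonneg_nonpos)
    then show "\<not> al * (p' \<bullet> u) + be * (q' \<bullet> u) > 0" by linarith
  qed
  then show False
  proof
    assume "p' \<bullet> u > 0"
    then show False using S2a[OF sd n a(2) _ o] a nG by auto
  next
    assume "q' \<bullet> u > 0"
    then show False using S2a[OF sd n arc_ends_sym[OF a(2)] _ o(2,1)] a nG geo_arc_sym by metis
  qed
qed


lemma KS':
  assumes sd: "spherical_diagram D" and n: "n \<noteq> 0"
    and pq: "arc_ends p q" "geo_arc p q \<in> D"
    and hE: "\<forall>b\<in>D. \<forall>x. endpoint_of x b \<and> x \<bullet> n > 0 \<longrightarrow> x \<bullet> m \<le> 0"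
    and mu: "m = u - g *\<^sub>R n"
    and ab: "al > 0" "be > 0" and xn: "(al *\<^sub>R p + be *\<^sub>R q) \<bullet> n > 0"
    and qm: "q \<bullet> m > 0" and e: "al * (p \<bullet> m) + be * (q \<bullet> m) = 0"
  shows "Gd D n u"
proof -
  have qn: "q \<bullet> n \<le> 0" using hE pq(2) endpoint_second[OF pq(1)] qm by force
  have xn': "al * (p \<bullet> n) + be * (q \<bullet> n) > 0" using xn by (simp add: inner_add_left)
  have "be * (q \<bullet> n) \<le> 0" using qn ab by (simp add: mult_nonneg_nonpos)
  then have "al * (p \<bullet> n) > 0" using xn' by linarith
  then have pn: "p \<bullet> n > 0" using ab by (simp add: zero_less_mult_iff)
  define c where "c = (- (q \<bullet> n)) *\<^sub>R p + (p \<bullet> n) *\<^sub>R q"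
  have cn: "c \<bullet> n = 0" by (simp add: c_def inner_add_left inner_diff_left mult.commute)
  have h1: "al * (p \<bullet> m) = - (be * (q \<bullet> m))" using e by linarith
  have "al * (c \<bullet> m) = - (q \<bullet> n) * (al * (p \<bullet> m)) + al * (p \<bullet> n) * (q \<bullet> m)"
    by (simp add: c_def inner_add_left algebra_simps)
  also have "\<dots> = (q \<bullet> m) * (al * (p \<bullet> n) + be * (q \<bullet> n))" unfolding h1 by (simp add: algebra_simps)
  finally have "al * (c \<bullet> m) > 0" using xn' qm by simp
  then have cm: "c \<bullet> m > 0" using ab by (simp add: zero_less_mult_iff)
  have cu: "c \<bullet> u = c \<bullet> m" using cn by (simp add: mu inner_diff_right)
  show ?thesis
  proof (cases "q \<bullet> n < 0")
    case True
    have T: "Tr n (geo_arc p q)" using pq pn True by (auto simp: Tr_def)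
    have qn': "- (q \<bullet> n) > 0" using True by simp
    have yi: "nz c \<in> geo_arc_int p q" unfolding c_def by (rule mk_arc_int[OF pq(1) qn' pn])
    have c0: "c \<noteq> 0" using cm by auto
    have "nz c \<bullet> n = 0" using cn by simp
    moreover have "nz c \<bullet> u > 0" using cu cm c0 by simp
    moreover have "nz c \<in> geo_arc p q" using yi int_sub_arc by blast
    ultimately have "\<exists>x\<in>geo_arc p q. x \<bullet> n = 0 \<and> x \<bullet> u > 0" by blast
    then show ?thesis using T pq(2) unfolding Gd_def by blast
  next
    case False
    then have q0: "q \<bullet> n = 0" using qn by simp
    then have "c = (p \<bullet> n) *\<^sub>R q" by (simp add: c_def)
    then have "c \<bullet> u = (p \<bullet> n) * (q \<bullet> u)" by simp
    then have "(p \<bullet> n) * (q \<bullet> u) > 0" using cu cm by linarith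
    then have "q \<bullet> u > 0" using pn by (simp add: zero_less_mult_iff)
    then show ?thesis using S2[OF sd n pq q0] by simp
  qed
qed

lemma KS:
  assumes sd: "spherical_diagram D" and n: "n \<noteq> 0"
    and pq: "arc_ends p q" "geo_arc p q \<in> D"
    and hE: "\<forall>b\<in>D. \<forall>x. endpoint_of x b \<and> x \<bullet> n > 0 \<longrightarrow> x \<bullet> m \<le> 0"
    and mu: "m = u - g *\<^sub>R n"
    and x: "x \<in> geo_arc_int p q" "x \<bullet> n > 0" "x \<bullet> m = 0"
  shows "Gd D n u \<or> (p \<bullet> m = 0 \<and> q \<bullet> m = 0)"
proof -
  obtain al be where ab: "al > 0" "be > 0" "x = al *\<^sub>R p + be *\<^sub>R q" using in_arc_int[OF pq(1) x(1)] by auto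
  have e: "al * (p \<bullet> m) + be * (q \<bullet> m) = 0" using x(3) ab(3) by (simp add: inner_add_left)
  have xn: "(al *\<^sub>R p + be *\<^sub>R q) \<bullet> n > 0" using x(2) ab(3) by simp
  show ?thesis
  proof (cases "q \<bullet> m > 0")
    case True
    then show ?thesis using KS'[OF sd n pq hE mu ab(1,2) xn True e] by simp
  next
    case False
    show ?thesis
    proof (cases "q \<bullet> m < 0")
      case True
      then have "be * (q \<bullet> m) < 0" using ab by (simp add: mult_pos_neg)
      then have "al * (p \<bullet> m) > 0" using e by linarith
      then have pm: "p \<bullet> m > 0" using ab by (simp add: zero_less_mult_iff)
      have pq': "arc_ends q p" "geo_arc q p \<in> D" using pq arc_ends_sym geo_arc_sym by auto
      have xn': "(be *\<^sub>R q + al *\<^sub>R p) \<bullet> n > 0" using xn by (simp add: add.commute)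
      have e': "be * (q \<bullet> m) + al * (p \<bullet> m) = 0" using e by simp
      show ?thesis using KS'[OF sd n pq' hE mu ab(2,1) xn' pm e'] by simp
    next
      case False2: False
      then have "q \<bullet> m = 0" using False by simp
      then have "p \<bullet> m = 0" using e ab by simp
      then show ?thesis using \<open>q \<bullet> m = 0\<close> by simp
    qed
  qed
qed

lemma endpoints_finite:
  assumes sd: "spherical_diagram D"
  shows "finite {x. \<exists>b\<in>D. endpoint_of x b}"
proof -
  have fD: "finite D" using sd by (simp add: spherical_diagram_def)
  have "finite {x. endpoint_of x b}" if b: "b \<in> D" for b
  proof -
    obtain p q where pq: "arc_ends p q" "b = geo_arc p q" using sd_arc[OF sd b] by blast
    have "{x. endpoint_of x b} \<subseteq> {p, q}" using endpoint_cases[OF pq(1)] pq(2) by blast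
    then show ?thesis by (rule finite_subset) simp
  qed
  moreover have "{x. \<exists>b\<in>D. endpoint_of x b} = (\<Union>b\<in>D. {x. endpoint_of x b})" by blast
  ultimately show ?thesis using fD by simp
qed

lemma main_lemma:
  assumes sd: "spherical_diagram D" and n: "n \<noteq> 0" and un: "u \<bullet> n = 0" and u0: "u \<noteq> 0"
    and ex: "\<exists>b\<in>D. \<exists>x. endpoint_of x b \<and> x \<bullet> n > 0"
  shows "Gd D n u"
proof (rule ccontr)
  assume nG: "\<not> Gd D n u"
  define E where "E = {x. \<exists>b\<in>D. endpoint_of x b \<and> x \<bullet> n > 0}"
  have fE: "finite E" using endpoints_finite[OF sd] by (rule finite_subset[rotated]) (auto simp: E_def)
  have neE: "E \<noteq> {}" using ex by (auto simp: E_def)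
  define f where "f x = (x \<bullet> u) / (x \<bullet> n)" for x
  define M where "M = Max (f ` E)"
  have "M \<in> f ` E" unfolding M_def using fE neE by simp
  then obtain v where v: "v \<in> E" "f v = M" by auto
  have fM: "f y \<le> M" if "y \<in> E" for y unfolding M_def using fE that by simp
  define m where "m = u - M *\<^sub>R n"
  have m0: "m \<noteq> 0"
  proof
    assume "m = 0"
    then have um: "u = M *\<^sub>R n" by (simp add: m_def)
    then have "M * (n \<bullet> n) = 0" using un by simp
    then have "M = 0" using n by simp
    then show False using um u0 by simp
  qed
  have hE: "\<forall>b\<in>D. \<forall>x. endpoint_of x b \<and> x \<bullet> n > 0 \<longrightarrow> x \<bullet> m \<le> 0"
  proof (intro ballI allI impI)
    fix b x assume b: "b \<in> D" and x: "endpoint_of x b \<and> x \<bullet> n > 0"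
    then have "x \<in> E" by (auto simp: E_def)
    then have "(x \<bullet> u) / (x \<bullet> n) \<le> M" using fM by (simp add: f_def)
    then have "x \<bullet> u \<le> M * (x \<bullet> n)" using x by (simp add: divide_le_eq)
    then show "x \<bullet> m \<le> 0" by (simp add: m_def inner_diff_right)
  qed
  have mu: "m = u - M *\<^sub>R n" by (simp add: m_def)
  have step2: False if e: "arc_ends e f'" "geo_arc e f' \<in> D" "e \<bullet> m = 0" "f' \<bullet> m = 0" "e \<bullet> n > 0" for e f'
  proof -
    obtain a p q where a: "a \<in> D" "arc_ends p q" "a = geo_arc p q" "e \<in> geo_arc_int p q"
      using sd_block[OF sd e(2) endpoint_first[OF e(1)]] by blast
    have "p \<bullet> m = 0 \<and> q \<bullet> m = 0" using KS[OF sd n a(2) _ hE mu a(4) e(5) e(3)] a nG by auto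
    then show False using sd_no_overlap[OF sd m0 e(1,2) a(2)] a e by auto
  qed
  obtain b where b: "b \<in> D" "endpoint_of v b" "v \<bullet> n > 0" using v(1) by (auto simp: E_def)
  have vm: "v \<bullet> m = 0"
  proof -
    have "(v \<bullet> u) / (v \<bullet> n) = M" using v(2) by (simp add: f_def)
    then have "v \<bullet> u = M * (v \<bullet> n)" using b(3) by (simp add: divide_eq_eq)
    then show ?thesis by (simp add: m_def inner_diff_right)
  qed
  obtain a p q where a: "a \<in> D" "arc_ends p q" "a = geo_arc p q" "v \<in> geo_arc_int p q"
    using sd_block[OF sd b(1,2)] by blast
  have pqm: "p \<bullet> m = 0" "q \<bullet> m = 0" using KS[OF sd n a(2) _ hE mu a(4) b(3) vm] a nG by auto
  obtain al be where ab: "al > 0" "be > 0" "v = al *\<^sub>R p + be *\<^sub>R q" using in_arc_int[OF a(2,4)] by auto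
  have "al * (p \<bullet> n) + be * (q \<bullet> n) > 0" using b(3) ab(3) by (simp add: inner_add_left)
  then have "p \<bullet> n > 0 \<or> q \<bullet> n > 0"
  proof (rule contrapos_pp)
    assume "\<not> (p \<bullet> n > 0 \<or> q \<bullet> n > 0)"
    then have "al * (p \<bullet> n) \<le> 0" "be * (q \<bullet> n) \<le> 0" using ab(1,2)
      by (simp_all add: mult_nonneg_nonpos)
    then show "\<not> al * (p \<bullet> n) + be * (q \<bullet> n) > 0" by linarith
  qed
  then show False
  proof
    assume "p \<bullet> n > 0"
    then show False using step2[OF a(2) _ pqm] a by auto
  next
    assume "q \<bullet> n > 0"
    then show False using step2[OF arc_ends_sym[OF a(2)] _ pqm(2,1)] a geo_arc_sym by metis
  qed
qed


lemma final_contra: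
  fixes n :: pt and X :: "pt set"
  assumes n: "n \<noteq> 0" and fX: "finite X" and cX: "card X \<le> 2"
    and Xp: "\<forall>x\<in>X. norm x = 1 \<and> x \<bullet> n = 0"
    and H: "\<forall>u. u \<bullet> n = 0 \<and> u \<noteq> 0 \<longrightarrow> (\<exists>x\<in>X. x \<bullet> u > 0)"
  shows False
proof -
  have "dim {n} \<le> card {n}" by (rule dim_le_card) (auto intro: span_base)
  then have "dim {n} < DIM(real^3)" by simp
  then obtain a :: pt where a: "a \<noteq> 0" "span {n} \<subseteq> {x. a \<bullet> x = 0}"
    using lowdim_subset_hyperplane by blast
  have "a \<bullet> n = 0" using a(2) span_base[of n "{n}"] by auto
  then have c0: "norm (nz a) = 1" "nz a \<bullet> n = 0" using a(1) by auto
  obtain x1 x2 where xs: "X \<subseteq> {x1, x2}" "norm x1 = 1" "x1 \<bullet> n = 0" "norm x2 = 1" "x2 \<bullet> n = 0"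
  proof -
    consider "card X = 0" | "card X = 1" | "card X = 2" using cX by linarith
    then show thesis
    proof cases
      case 1
      then have "X = {}" using fX by simp
      then show thesis using that[of "nz a" "nz a"] c0 by simp
    next
      case 2
      then obtain x where "X = {x}" by (rule card_1_singletonE)
      then show thesis using that[of x x] Xp by simp
    next
      case 3
      then obtain x y where "X = {x, y}" by (auto simp: card_2_iff)
      then show thesis using that[of x y] Xp by simp
    qed
  qed
  have ii: "x1 \<bullet> x1 = 1" "x2 \<bullet> x2 = 1" using xs by (simp_all add: power2_norm_eq_inner[symmetric])
  show False
  proof (cases "x1 + x2 = 0")
    case False
    define u where "u = - (x1 + x2)"
    have un: "u \<bullet> n = 0" using xs by (simp add: u_def inner_add_left inner_diff_left)
    have u0: "u \<noteq> 0" using False unfolding u_def by (metis neg_equal_0_iff_equal)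
    have cs: "\<bar>x1 \<bullet> x2\<bar> \<le> 1" using Cauchy_Schwarz_ineq2[of x1 x2] xs by simp
    have "x1 \<bullet> u = - (x1 \<bullet> x1) - x1 \<bullet> x2" "x2 \<bullet> u = - (x1 \<bullet> x2) - x2 \<bullet> x2"
      by (simp_all add: u_def inner_diff_right inner_commute)
    then have "x1 \<bullet> u \<le> 0" "x2 \<bullet> u \<le> 0" using ii cs by linarith+
    then show False using H un u0 xs(1) by fastforce
  next
    case True
    then have x2: "x2 = - x1" by (simp add: add_eq_0_iff2)
    define u where "u = cross3 n x1"
    have un: "u \<bullet> n = 0" using dot_cross_self(1)[of n x1] by (simp add: u_def inner_commute)
    have ux: "x1 \<bullet> u = 0" using dot_cross_self(3)[of n x1] by (simp add: u_def inner_commute)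
    have u0: "u \<noteq> 0"
    proof
      assume "u = 0"
      then have "collinear {0, n, x1}" by (simp add: u_def cross_eq_0)
      then obtain c where "n = 0 \<or> x1 = 0 \<or> x1 = c *\<^sub>R n" by (auto simp: collinear_lemma)
      moreover have "x1 \<noteq> 0" using xs by auto
      ultimately have xc: "x1 = c *\<^sub>R n" using n by simp
      then have "c * (n \<bullet> n) = 0" using xs(3) by simp
      then have "c = 0" using n by simp
      then show False using xc xs by simp
    qed
    have "x2 \<bullet> u = 0" using ux x2 by simp
    then show False using H un u0 xs(1) ux by fastforce
  qed
qed

theorem mainTheorem17:
  assumes "spherical_diagram D"
    and "n \<noteq> 0"
  shows "card {a \<in> D. crosses a (great_circle n)} \<ge> 3"
proof (rule ccontr)
  assume nc: "\<not> card {a \<in> D. crosses a (great_circle n)} \<ge> 3"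
  note sd = assms(1) and n = assms(2)
  define T where "T = {a \<in> D. Tr n a}"
  have fD: "finite D" using sd by (simp add: spherical_diagram_def)
  have TS: "T \<subseteq> {a \<in> D. crosses a (great_circle n)}"
    using trans_crosses by (auto simp: T_def Tr_def)
  have fT: "finite T" using fD by (simp add: T_def)
  have cT: "card T \<le> 2"
    using card_mono[OF _ TS] fD nc by simp
  have Ex: "(\<exists>b\<in>D. \<exists>x. endpoint_of x b \<and> x \<bullet> n > 0) \<or> (\<exists>b\<in>D. \<exists>x. endpoint_of x b \<and> x \<bullet> (- n) > 0)"
  proof (rule ccontr)
    assume "\<not> ?thesis"
    then have z: "\<And>b x. b \<in> D \<Longrightarrow> endpoint_of x b \<Longrightarrow> x \<bullet> n = 0" by fastforce
    obtain b where b: "b \<in> D" using sd by (auto simp: spherical_diagram_def)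
    obtain p q where pq: "arc_ends p q" "b = geo_arc p q" using sd_arc[OF sd b] by blast
    have o1: "p \<bullet> n = 0" "q \<bullet> n = 0" using z b pq endpoint_first endpoint_second by blast+
    have ep: "endpoint_of p b" using endpoint_first[OF pq(1)] pq(2) by simp
    obtain a p' q' where a: "a \<in> D" "arc_ends p' q'" "a = geo_arc p' q'" "p \<in> geo_arc_int p' q'"
      using sd_block[OF sd b ep] by blast
    have o2: "p' \<bullet> n = 0" "q' \<bullet> n = 0" using z a endpoint_first endpoint_second by blast+
    show False using sd_no_overlap[OF sd n pq(1) _ a(2) _ o1 o2 a(4)] a b pq by simp
  qed
  have GT: "\<exists>a\<in>T. \<exists>x\<in>a. x \<bullet> n = 0 \<and> x \<bullet> u > 0" if u: "u \<bullet> n = 0" "u \<noteq> 0" for u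
    using Ex
  proof
    assume "\<exists>b\<in>D. \<exists>x. endpoint_of x b \<and> x \<bullet> n > 0"
    from main_lemma[OF sd n u this] show ?thesis by (auto simp: Gd_def T_def)
  next
    assume e: "\<exists>b\<in>D. \<exists>x. endpoint_of x b \<and> x \<bullet> (- n) > 0"
    have n': "- n \<noteq> 0" using n by simp
    have u': "u \<bullet> (- n) = 0" using u by simp
    from main_lemma[OF sd n' u' u(2) e] obtain a x where
      ax: "a \<in> D" "Tr (- n) a" "x \<in> a" "x \<bullet> (- n) = 0" "x \<bullet> u > 0" by (auto simp: Gd_def)
    have "Tr n a" using ax(2) arc_ends_sym geo_arc_sym unfolding Tr_def
      by (metis inner_minus_right neg_0_less_iff_less neg_less_0_iff_less)
    then show ?thesis using ax by (auto simp: T_def)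
  qed
  define chi where "chi a = (SOME x. x \<in> a \<and> x \<bullet> n = 0)" for a
  have chi: "chi a \<in> a \<and> chi a \<bullet> n = 0 \<and> norm (chi a) = 1 \<and> (\<forall>x\<in>a. x \<bullet> n = 0 \<longrightarrow> x = chi a)"
    if a: "a \<in> T" "x0 \<in> a" "x0 \<bullet> n = 0" for a x0
  proof -
    have "x0 \<in> a \<and> x0 \<bullet> n = 0" using a(2,3) by simp
    then have c1: "chi a \<in> a \<and> chi a \<bullet> n = 0" unfolding chi_def by (rule someI)
    obtain p q where pq: "arc_ends p q" "a = geo_arc p q" "p \<bullet> n > 0" "q \<bullet> n < 0"
      using a(1) by (auto simp: T_def Tr_def)
    have "norm (chi a) = 1" using in_arc[OF pq(1)] c1 pq(2) by blast
    moreover have "\<forall>x\<in>a. x \<bullet> n = 0 \<longrightarrow> x = chi a"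
      using cross_unique[OF pq(1,3,4)] c1 pq(2) by blast
    ultimately show ?thesis using c1 by blast
  qed
  have ex_pt: "\<exists>x0\<in>a. x0 \<bullet> n = 0" if a: "a \<in> T" for a
  proof -
    obtain p q where pq: "arc_ends p q" "a = geo_arc p q" "p \<bullet> n > 0" "q \<bullet> n < 0"
      using a by (auto simp: T_def Tr_def)
    have "crosses a (great_circle n)" using trans_crosses[OF pq(1,3,4)] pq(2) by simp
    then show ?thesis unfolding crosses_def great_circle_def using int_sub_arc by blast
  qed
  define X where "X = chi ` T"
  have fX: "finite X" using fT by (simp add: X_def)
  have cX: "card X \<le> 2" using card_image_le[OF fT, of chi] cT by (simp add: X_def)
  have Xp: "\<forall>x\<in>X. norm x = 1 \<and> x \<bullet> n = 0"
    using chi ex_pt by (force simp: X_def)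
  have H: "\<forall>u. u \<bullet> n = 0 \<and> u \<noteq> 0 \<longrightarrow> (\<exists>x\<in>X. x \<bullet> u > 0)"
  proof (intro allI impI)
    fix u :: pt assume u: "u \<bullet> n = 0 \<and> u \<noteq> 0"
    then obtain a x where ax: "a \<in> T" "x \<in> a" "x \<bullet> n = 0" "x \<bullet> u > 0" using GT by blast
    then have "x = chi a" using chi[OF ax(1-3)] by blast
    then show "\<exists>x\<in>X. x \<bullet> u > 0" using ax by (auto simp: X_def)
  qed
  show False using final_contra[OF n fX cX Xp H] .
qed

end
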